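(* Let $G$ be an infinite vertex-transitive graph of finite degree with a fixed vertex $o$. For every $D\in\mathbb{N}$ there exists $L_0=L_0(D)$ such that for every $L>L_0$, \[ \sum_{x\in B_L}G_{B_L}(x,o)<10\sum_{x\in B_L:\ B(x,D)\subset B_L}G_{B_L}(x,o). \]
   Context: $B(x,r)$ is the ball of radius $r$ (in graph distance) centered at $x$, and $B_L=B(o,L)$. For $Z\subset V(G)$, $G_Z(x,y)=E_x\bigl[\sum_{t=0}^{\tau_{Z^c}}\mathbf{1}\{X(t)=y\}\bigr]$, where $X$ is simple random walk on $G$ started at $x$ and $\tau_{Z^c}=\inf\{t\ge0:X(t)\notin Z\}$. *)

theory Defs
  imports "HOL-Analysis.Analysis"
begin

text \<open>Graphs: vertex set = the type 'a, adjacency E symmetric and irreflexive.\<close>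

definition nbrs :: "('a \<Rightarrow> 'a \<Rightarrow> bool) \<Rightarrow> 'a \<Rightarrow> 'a set" where
  "nbrs E x = {y. E x y}"

definition graph_rel :: "('a \<Rightarrow> 'a \<Rightarrow> bool) \<Rightarrow> ('a \<times> 'a) set" where
  "graph_rel E = {(u, v). E u v}"

definition connected_graph :: "('a \<Rightarrow> 'a \<Rightarrow> bool) \<Rightarrow> bool" where
  "connected_graph E \<longleftrightarrow> (\<forall>x y. (x, y) \<in> (graph_rel E)\<^sup>*)"

definition vertex_transitive :: "('a \<Rightarrow> 'a \<Rightarrow> bool) \<Rightarrow> bool" where
  "vertex_transitive E \<longleftrightarrow>
     (\<forall>x y. \<exists>f. bij f \<and> (\<forall>u v. E u v \<longleftrightarrow> E (f u) (f v)) \<and> f x = y)"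

definition gdist :: "('a \<Rightarrow> 'a \<Rightarrow> bool) \<Rightarrow> 'a \<Rightarrow> 'a \<Rightarrow> nat" where
  "gdist E x y = (LEAST n. (x, y) \<in> graph_rel E ^^ n)"

definition gball :: "('a \<Rightarrow> 'a \<Rightarrow> bool) \<Rightarrow> 'a \<Rightarrow> nat \<Rightarrow> 'a set" where
  "gball E x r = {y. gdist E x y \<le> r}"

definition srw_p :: "('a \<Rightarrow> 'a \<Rightarrow> bool) \<Rightarrow> 'a \<Rightarrow> 'a \<Rightarrow> real" where
  "srw_p E x y = (if E x y then 1 / real (card (nbrs E x)) else 0)"

text \<open>killed_pow E Z t x y = P_x(X_t = y and X_0,...,X_{t-1} \<in> Z) = P_x(X_t = y, t \<le> \<tau>_{Z^c}).\<close>
fun killed_pow :: "('a \<Rightarrow> 'a \<Rightarrow> bool) \<Rightarrow> 'a set \<Rightarrow> nat \<Rightarrow> 'a \<Rightarrow> 'a \<Rightarrow> real" where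
  "killed_pow E Z 0 x y = (if x = y then 1 else 0)"
| "killed_pow E Z (Suc t) x y =
     (if x \<in> Z then (\<Sum>z\<in>nbrs E x. srw_p E x z * killed_pow E Z t z y) else 0)"

text \<open>Green function G_Z(x,y) = E_x[sum_{t=0}^{\<tau>} 1{X_t = y}] = sum_t P_x(X_t=y, t \<le> \<tau>).\<close>
definition green :: "('a \<Rightarrow> 'a \<Rightarrow> bool) \<Rightarrow> 'a set \<Rightarrow> 'a \<Rightarrow> 'a \<Rightarrow> ennreal" where
  "green E Z x y = (\<Sum>t. ennreal (killed_pow E Z t x y))"

end

theory Submission
  imports Defs
begin

locale rg =
  fixes E :: "'a \<Rightarrow> 'a \<Rightarrow> bool" and d :: nat
  assumes symE: "\<And>x y. E x y \<longleftrightarrow> E y x"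
  and fin: "\<And>x. finite (nbrs E x)"
  and reg: "\<And>x. card (nbrs E x) = d"
  and dpos: "d > 0"
begin

lemma p_sym: "srw_p E x y = srw_p E y x"
  unfolding srw_p_def using reg symE by auto

lemma p_nonneg: "srw_p E x y \<ge> 0"
  unfolding srw_p_def by auto

lemma sum_p: "(\<Sum>z\<in>nbrs E x. srw_p E x z) = 1"
proof -
  have "(\<Sum>z\<in>nbrs E x. srw_p E x z) = (\<Sum>z\<in>nbrs E x. 1 / real d)"
  proof (rule sum.cong)
    fix z assume "z \<in> nbrs E x"
    then have "E x z" by (simp add: nbrs_def)
    then show "srw_p E x z = 1 / real d" by (simp add: srw_p_def reg)
  qed simp
  also have "\<dots> = 1" using reg[of x] dpos by simp
  finally show ?thesis .
qed

lemma kp_nonneg: "killed_pow E Z t x y \<ge> 0"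
  by (induction t arbitrary: x) (auto intro!: sum_nonneg mult_nonneg_nonneg p_nonneg)

lemma kp_out: "z \<notin> Z \<Longrightarrow> y \<in> Z \<Longrightarrow> killed_pow E Z t z y = 0"
  by (cases t) auto

lemma swap_lemma: "(\<Sum>w\<in>nbrs E x. srw_p E x w *
      (\<Sum>z\<in>nbrs E y. if z \<in> Z then killed_pow E Z t w z * srw_p E z y else 0))
      = (\<Sum>z\<in>nbrs E y. if z \<in> Z then (\<Sum>w\<in>nbrs E x. srw_p E x w *
      killed_pow E Z t w z) * srw_p E z y else 0)"
proof -
    have "(\<Sum>w\<in>nbrs E x. srw_p E x w *
      (\<Sum>z\<in>nbrs E y. if z \<in> Z then killed_pow E Z t w z * srw_p E z y else 0))
      = (\<Sum>w\<in>nbrs E x. \<Sum>z\<in>nbrs E y. if z \<in> Z then srw_p E x w * killed_pow E Z t w z * srw_p E z y else 0)"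
      by (auto simp: sum_distrib_left intro!: sum.cong)
    also have "\<dots> = (\<Sum>z\<in>nbrs E y. \<Sum>w\<in>nbrs E x. if z \<in> Z then srw_p E x w * killed_pow E Z t w z * srw_p E z y else 0)"
      by (rule sum.swap)
    also have "\<dots> = (\<Sum>z\<in>nbrs E y. if z \<in> Z then (\<Sum>w\<in>nbrs E x. srw_p E x w *
      killed_pow E Z t w z) * srw_p E z y else 0)"
      by (auto simp: sum_distrib_right intro!: sum.cong)
    finally show ?thesis .
qed

lemma kp_last: "killed_pow E Z (Suc t) x y =
   (\<Sum>z\<in>nbrs E y. if z \<in> Z then killed_pow E Z t x z * srw_p E z y else 0)"
proof (induction t arbitrary: x)
  case 0
  have "killed_pow E Z (Suc 0) x y = (if x \<in> Z then (\<Sum>z\<in>nbrs E x. if z = y then srw_p E x z else 0) else 0)"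
    by (auto intro!: sum.cong)
  also have "\<dots> = (if x \<in> Z \<and> E x y then srw_p E x y else 0)"
    using fin[of x] by (auto simp: nbrs_def)
  also have "\<dots> = (\<Sum>z\<in>nbrs E y. if z = x then (if z \<in> Z then srw_p E z y else 0) else 0)"
    using fin[of y] symE[of x y] by (auto simp: nbrs_def)
  also have "\<dots> = (\<Sum>z\<in>nbrs E y. if z \<in> Z then killed_pow E Z 0 x z * srw_p E z y else 0)"
    by (auto intro!: sum.cong)
  finally show ?case .
next
  case (Suc t x)
  have "killed_pow E Z (Suc (Suc t)) x y = (if x \<in> Z then (\<Sum>w\<in>nbrs E x. srw_p E x w * killed_pow E Z (Suc t) w y) else 0)"
    by (simp only: killed_pow.simps)
  also have "\<dots> = (if x \<in> Z then (\<Sum>w\<in>nbrs E x. srw_p E x w *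
      (\<Sum>z\<in>nbrs E y. if z \<in> Z then killed_pow E Z t w z * srw_p E z y else 0)) else 0)"
    by (simp only: Suc.IH)
  also have "\<dots> = (if x \<in> Z then (\<Sum>z\<in>nbrs E y. if z \<in> Z then (\<Sum>w\<in>nbrs E x. srw_p E x w *
      killed_pow E Z t w z) * srw_p E z y else 0) else 0)"
    by (simp only: swap_lemma)
  also have "\<dots> = (\<Sum>z\<in>nbrs E y. if z \<in> Z then (if x \<in> Z then (\<Sum>w\<in>nbrs E x. srw_p E x w *
      killed_pow E Z t w z) else 0) * srw_p E z y else 0)"
    by (cases "x \<in> Z") (auto intro!: sum.cong sum.neutral)
  also have "\<dots> = (\<Sum>z\<in>nbrs E y. if z \<in> Z then killed_pow E Z (Suc t) x z * srw_p E z y else 0)"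
    by (simp only: killed_pow.simps)
  finally show ?case .
qed

lemma kp_sym: "x \<in> Z \<Longrightarrow> y \<in> Z \<Longrightarrow> killed_pow E Z t x y = killed_pow E Z t y x"
proof (induction t arbitrary: x y)
  case 0
  then show ?case by simp
next
  case (Suc t x y)
  have "killed_pow E Z (Suc t) y x =
     (\<Sum>z\<in>nbrs E x. if z \<in> Z then killed_pow E Z t y z * srw_p E z x else 0)"
    by (rule kp_last)
  also have "\<dots> = (\<Sum>z\<in>nbrs E x. srw_p E x z * killed_pow E Z t z y)"
  proof (rule sum.cong)
    fix z assume "z \<in> nbrs E x"
    show "(if z \<in> Z then killed_pow E Z t y z * srw_p E z x else 0) = srw_p E x z * killed_pow E Z t z y"
    proof (cases "z \<in> Z")
      case True
      then show ?thesis using Suc.IH[of z y] Suc.prems p_sym[of z x] by simp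
    next
      case False
      then show ?thesis using kp_out[of z Z y t] Suc.prems by simp
    qed
  qed simp
  also have "\<dots> = killed_pow E Z (Suc t) x y" using Suc.prems by simp
  finally show ?case by simp
qed

lemma kp_CK: "finite Z \<Longrightarrow> y \<in> Z \<Longrightarrow>
   killed_pow E Z (t + m) u y = (\<Sum>x\<in>Z. killed_pow E Z t u x * killed_pow E Z m x y)"
proof (induction t arbitrary: u)
  case 0
  show ?case
  proof (cases "u \<in> Z")
    case True
    have "(\<Sum>x\<in>Z. killed_pow E Z 0 u x * killed_pow E Z m x y) = (\<Sum>x\<in>Z. if x = u then killed_pow E Z m x y else 0)"
      by (rule sum.cong) auto
    also have "\<dots> = killed_pow E Z m u y" using True 0 by (simp add: sum.delta')
    finally show ?thesis by simp
  next
    case False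
    then show ?thesis using kp_out[of u Z y m] 0 by (auto intro!: sum.neutral)
  qed
next
  case (Suc t u)
  have "killed_pow E Z (Suc t + m) u y = (if u \<in> Z then (\<Sum>z\<in>nbrs E u. srw_p E u z * killed_pow E Z (t + m) z y) else 0)"
    by simp
  also have "\<dots> = (if u \<in> Z then (\<Sum>z\<in>nbrs E u. srw_p E u z * (\<Sum>x\<in>Z. killed_pow E Z t z x * killed_pow E Z m x y)) else 0)"
    using Suc.IH[OF Suc.prems] by simp
  also have "\<dots> = (\<Sum>x\<in>Z. killed_pow E Z (Suc t) u x * killed_pow E Z m x y)"
  proof (cases "u \<in> Z")
    case True
    have "(\<Sum>z\<in>nbrs E u. srw_p E u z * (\<Sum>x\<in>Z. killed_pow E Z t z x * killed_pow E Z m x y))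
       = (\<Sum>z\<in>nbrs E u. \<Sum>x\<in>Z. srw_p E u z * killed_pow E Z t z x * killed_pow E Z m x y)"
      by (simp add: sum_distrib_left mult.assoc)
    also have "\<dots> = (\<Sum>x\<in>Z. \<Sum>z\<in>nbrs E u. srw_p E u z * killed_pow E Z t z x * killed_pow E Z m x y)"
      by (rule sum.swap)
    also have "\<dots> = (\<Sum>x\<in>Z. killed_pow E Z (Suc t) u x * killed_pow E Z m x y)"
      using True by (simp add: sum_distrib_right)
    finally show ?thesis using True by simp
  qed simp
  finally show ?case .
qed

definition H :: "'a set \<Rightarrow> nat \<Rightarrow> 'a \<Rightarrow> real" where
  "H Z m x = (\<Sum>y\<in>Z. killed_pow E Z m x y)"

lemma H0: "finite Z \<Longrightarrow> H Z 0 x = (if x \<in> Z then 1 else 0)"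
  unfolding H_def by (simp add: sum.delta')

lemma HSuc: "H Z (Suc m) x = (if x \<in> Z then (\<Sum>z\<in>nbrs E x. srw_p E x z * H Z m z) else 0)"
  unfolding H_def by (auto simp: sum_distrib_left intro: sum.swap)

lemma H_bounds: "finite Z \<Longrightarrow> 0 \<le> H Z m x \<and> H Z m x \<le> 1"
proof (induction m arbitrary: x)
  case 0
  then show ?case by (simp add: H0)
next
  case (Suc m x)
  have "(\<Sum>z\<in>nbrs E x. srw_p E x z * H Z m z) \<le> (\<Sum>z\<in>nbrs E x. srw_p E x z)"
    by (rule sum_mono) (use Suc p_nonneg in \<open>auto intro: mult_left_le\<close>)
  moreover have "0 \<le> (\<Sum>z\<in>nbrs E x. srw_p E x z * H Z m z)"
    by (rule sum_nonneg) (use Suc p_nonneg in auto)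
  ultimately show ?case by (simp add: HSuc sum_p)
qed

lemma H_dec: "finite Z \<Longrightarrow> H Z (Suc m) x \<le> H Z m x"
proof (induction m arbitrary: x)
  case 0
  have "(\<Sum>z\<in>nbrs E x. srw_p E x z * H Z 0 z) \<le> (\<Sum>z\<in>nbrs E x. srw_p E x z)"
    by (rule sum_mono) (use 0 H_bounds p_nonneg in \<open>auto intro: mult_left_le\<close>)
  then show ?case using 0 by (simp add: HSuc sum_p H0)
next
  case (Suc m x)
  have "(\<Sum>z\<in>nbrs E x. srw_p E x z * H Z (Suc m) z) \<le> (\<Sum>z\<in>nbrs E x. srw_p E x z * H Z m z)"
    by (rule sum_mono) (use Suc p_nonneg in \<open>auto intro: mult_left_mono\<close>)
  then show ?case by (simp add: HSuc[of Z "Suc m"] HSuc[of Z m])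
qed

lemma H_anti: "finite Z \<Longrightarrow> k \<le> m \<Longrightarrow> H Z m x \<le> H Z k x"
  using lift_Suc_antimono_le[of "\<lambda>m. H Z m x"] H_dec by blast

lemma H_path: "finite Z \<Longrightarrow> (x, y) \<in> graph_rel E ^^ k \<Longrightarrow> y \<notin> Z \<Longrightarrow> H Z k x \<le> 1 - 1 / real d ^ k"
proof (induction k arbitrary: x)
  case 0
  then show ?case by (simp add: H0)
next
  case (Suc k x)
  obtain z where xz: "(x, z) \<in> graph_rel E" and zy: "(z, y) \<in> graph_rel E ^^ k"
    using relpow_Suc_D2[OF Suc.prems(2)] by blast
  have zn: "z \<in> nbrs E x" using xz by (simp add: graph_rel_def nbrs_def)
  have d1: "real d \<ge> 1" using dpos by simp
  have dk: "0 < 1 / real d ^ Suc k" using dpos by simp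
  show ?case
  proof (cases "x \<in> Z")
    case False
    have "1 \<le> real d ^ Suc k" using d1 by (rule one_le_power)
    then have "1 / real d ^ Suc k \<le> 1" by simp
    then show ?thesis using False by (simp add: HSuc)
  next
    case True
    have pz: "srw_p E x z = 1 / real d" using xz by (simp add: srw_p_def graph_rel_def reg)
    have "(\<Sum>w\<in>nbrs E x. srw_p E x w * H Z k w) = srw_p E x z * H Z k z + (\<Sum>w\<in>nbrs E x - {z}. srw_p E x w * H Z k w)"
      using zn fin[of x] by (simp add: sum.remove)
    also have "(\<Sum>w\<in>nbrs E x - {z}. srw_p E x w * H Z k w) \<le> (\<Sum>w\<in>nbrs E x - {z}. srw_p E x w)"
      by (rule sum_mono) (use Suc H_bounds p_nonneg in \<open>auto intro: mult_left_le\<close>)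
    also have "(\<Sum>w\<in>nbrs E x - {z}. srw_p E x w) = 1 - 1 / real d"
      using sum_p[of x] zn fin[of x] pz by (simp add: sum.remove)
    also have "srw_p E x z * H Z k z \<le> (1 / real d) * (1 - 1 / real d ^ k)"
      using Suc.IH[OF Suc.prems(1) zy Suc.prems(3)] pz dpos by (simp add: divide_right_mono)
    finally have "(\<Sum>w\<in>nbrs E x. srw_p E x w * H Z k w) \<le> (1 / real d) * (1 - 1 / real d ^ k) + (1 - 1 / real d)"
      by simp
    also have "\<dots> = 1 - 1 / real d ^ Suc k" using dpos by (simp add: field_simps)
    finally show ?thesis using True by (simp add: HSuc)
  qed
qed

lemma leak:
  assumes Zf: "finite Z" and SZ: "S \<subseteq> Z" and uZ: "True"
    and hS: "\<And>x. x \<in> S \<Longrightarrow> H Z m x \<le> 1 - q"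
  shows "H Z (t + m) u \<le> H Z t u - q * (\<Sum>x\<in>S. killed_pow E Z t u x)"
proof -
  have "H Z (t + m) u = (\<Sum>y\<in>Z. \<Sum>x\<in>Z. killed_pow E Z t u x * killed_pow E Z m x y)"
    unfolding H_def using Zf by (auto intro!: sum.cong kp_CK)
  also have "\<dots> = (\<Sum>x\<in>Z. \<Sum>y\<in>Z. killed_pow E Z t u x * killed_pow E Z m x y)"
    by (rule sum.swap)
  also have "\<dots> = (\<Sum>x\<in>Z. killed_pow E Z t u x * H Z m x)"
    unfolding H_def by (simp add: sum_distrib_left)
  also have "\<dots> \<le> (\<Sum>x\<in>Z. killed_pow E Z t u x * (if x \<in> S then 1 - q else 1))"
  proof (rule sum_mono)
    fix x assume "x \<in> Z"
    have k0: "0 \<le> killed_pow E Z t u x" by (rule kp_nonneg)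
    show "killed_pow E Z t u x * H Z m x \<le> killed_pow E Z t u x * (if x \<in> S then 1 - q else 1)"
      using hS[of x] H_bounds[OF Zf, of m x] k0 by (auto intro: mult_left_mono mult_left_le)
  qed
  also have "\<dots> = (\<Sum>x\<in>Z. killed_pow E Z t u x) - q * (\<Sum>x\<in>Z. if x \<in> S then killed_pow E Z t u x else 0)"
    by (simp add: sum_distrib_left sum_subtractf[symmetric] algebra_simps if_distrib cong: if_cong)
  also have "(\<Sum>x\<in>Z. if x \<in> S then killed_pow E Z t u x else 0) = (\<Sum>x\<in>S. killed_pow E Z t u x)"
    using Zf SZ by (simp add: sum.inter_restrict[symmetric] Int_absorb1 inf.absorb2)
  finally show ?thesis unfolding H_def by simp
qed

lemma leak_sum:
  assumes Zf: "finite Z" and SZ: "S \<subseteq> Z"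
    and hS: "\<And>x. x \<in> S \<Longrightarrow> H Z m x \<le> 1 - q"
  shows "q * (\<Sum>t<N. \<Sum>x\<in>S. killed_pow E Z t u x) + (\<Sum>j<m. H Z (N + j) u) \<le> (\<Sum>j<m. H Z j u)"
proof (induction N)
  case 0
  then show ?case by simp
next
  case (Suc N)
  have l: "H Z (N + m) u \<le> H Z N u - q * (\<Sum>x\<in>S. killed_pow E Z N u x)"
    by (rule leak[OF Zf SZ _ hS]) auto
  have e1: "(\<Sum>j<Suc m. H Z (N + j) u) = H Z N u + (\<Sum>j<m. H Z (Suc N + j) u)"
    by (subst sum.lessThan_Suc_shift) simp
  have e2: "(\<Sum>j<Suc m. H Z (N + j) u) = (\<Sum>j<m. H Z (N + j) u) + H Z (N + m) u"
    by simp
  show ?case using Suc.IH l e1 e2 by (simp add: algebra_simps)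
qed

lemma leak_bound:
  assumes Zf: "finite Z" and SZ: "S \<subseteq> Z" and q: "q > 0"
    and hS: "\<And>x. x \<in> S \<Longrightarrow> H Z m x \<le> 1 - q"
  shows "(\<Sum>t<N. \<Sum>x\<in>S. killed_pow E Z t u x) \<le> real m / q"
proof -
  have "(\<Sum>j<m. H Z (N + j) u) \<ge> 0" by (rule sum_nonneg) (use H_bounds[OF Zf] in auto)
  moreover have "(\<Sum>j<m. H Z j u) \<le> (\<Sum>j<m. 1)" by (rule sum_mono) (use H_bounds[OF Zf] in auto)
  ultimately have "q * (\<Sum>t<N. \<Sum>x\<in>S. killed_pow E Z t u x) \<le> real m"
    using leak_sum[OF Zf SZ hS, where N=N and u=u] by simp
  then show ?thesis using q by (simp add: field_simps)
qed

lemma H_full: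
  assumes Zf: "finite Z" and step: "\<And>x z. E x z \<Longrightarrow> g z \<le> Suc (g x)"
    and inZ: "\<And>x. g x \<le> L \<Longrightarrow> x \<in> Z"
  shows "g x + t \<le> L \<Longrightarrow> H Z t x = 1"
proof (induction t arbitrary: x)
  case 0
  then show ?case using inZ[of x] Zf by (simp add: H0)
next
  case (Suc t x)
  have "(\<Sum>z\<in>nbrs E x. srw_p E x z * H Z t z) = (\<Sum>z\<in>nbrs E x. srw_p E x z)"
  proof (rule sum.cong)
    fix z assume "z \<in> nbrs E x"
    then have "g z \<le> Suc (g x)" using step by (simp add: nbrs_def)
    then show "srw_p E x z * H Z t z = srw_p E x z" using Suc.IH[of z] Suc.prems by simp
  qed simp
  then show ?case using inZ[of x] Suc.prems by (simp add: HSuc sum_p)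
qed

end

lemma gdist_rel: "connected_graph E \<Longrightarrow> (x, y) \<in> graph_rel E ^^ gdist E x y"
  unfolding gdist_def connected_graph_def
  by (rule LeastI_ex) (use rtrancl_power in blast)

lemma gdist_le: "(x, y) \<in> graph_rel E ^^ k \<Longrightarrow> gdist E x y \<le> k"
  unfolding gdist_def by (rule Least_le)

lemma gdist_step: "connected_graph E \<Longrightarrow> E x z \<Longrightarrow> gdist E r z \<le> Suc (gdist E r x)"
  by (rule gdist_le, rule relpow_Suc_I[OF gdist_rel]) (auto simp: graph_rel_def)

lemma level_finite: "(\<And>x. finite (nbrs E x)) \<Longrightarrow> finite {y. (r, y) \<in> graph_rel E ^^ k}"
proof (induction k)
  case 0
  then show ?case by simp
next
  case (Suc k)
  have "{y. (r, y) \<in> graph_rel E ^^ Suc k} \<subseteq> (\<Union>z\<in>{y. (r, y) \<in> graph_rel E ^^ k}. nbrs E z)"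
    by (auto elim!: relpow_Suc_E simp: graph_rel_def nbrs_def)
  then show ?case using Suc by (meson finite_UN_I finite_subset)
qed

lemma ball_finite: "(\<And>x. finite (nbrs E x)) \<Longrightarrow> connected_graph E \<Longrightarrow> finite (gball E r L)"
proof -
  assume f: "\<And>x. finite (nbrs E x)" and c: "connected_graph E"
  have "gball E r L \<subseteq> (\<Union>k\<le>L. {y. (r, y) \<in> graph_rel E ^^ k})"
    unfolding gball_def using gdist_rel[OF c] by blast
  then show ?thesis using level_finite[OF f] by (meson finite_UN_I finite_atMost finite_subset)
qed

lemma vt_regular:
  assumes vt: "vertex_transitive E" and f: "\<And>x. finite (nbrs E x)"
  shows "card (nbrs E x) = card (nbrs E r)"
proof -
  obtain g where b: "bij g" and e: "\<And>u v. E u v \<longleftrightarrow> E (g u) (g v)" and gx: "g r = x"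
    using vt unfolding vertex_transitive_def by blast
  have "nbrs E x = g ` nbrs E r"
  proof
    show "g ` nbrs E r \<subseteq> nbrs E x" using e gx by (auto simp: nbrs_def)
  next
    show "nbrs E x \<subseteq> g ` nbrs E r"
    proof
      fix w assume "w \<in> nbrs E x"
      then have "E (g r) (g (inv g w))" using gx b by (simp add: nbrs_def bij_is_surj surj_f_inv_f)
      then have "inv g w \<in> nbrs E r" using e by (simp add: nbrs_def)
      moreover have "w = g (inv g w)" using b by (simp add: bij_is_surj surj_f_inv_f)
      ultimately show "w \<in> g ` nbrs E r" by blast
    qed
  qed
  moreover have "inj_on g (nbrs E r)" using b bij_is_inj inj_on_subset by blast
  ultimately show ?thesis by (simp add: card_image)
qed

theorem lemma4p1:
  fixes E :: "'a \<Rightarrow> 'a \<Rightarrow> bool" and root :: 'a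
  assumes sym: "\<And>x y. E x y \<longleftrightarrow> E y x"
    and irrefl: "\<And>x. \<not> E x x"
    and infinite_V: "infinite (UNIV :: 'a set)"
    and finite_deg: "\<And>x. finite (nbrs E x)"
    and conn: "connected_graph E"
    and vt: "vertex_transitive E"
  shows "\<forall>D::nat. \<exists>L0::nat. \<forall>L>L0.
           (\<Sum>x\<in>gball E root L. green E (gball E root L) x root)
             < 10 * (\<Sum>x\<in>{x \<in> gball E root L. gball E x D \<subseteq> gball E root L}.
                        green E (gball E root L) x root)"
proof
  fix D :: nat
  define d where "d = card (nbrs E root)"
  have reg: "\<And>x. card (nbrs E x) = d" unfolding d_def using vt_regular[OF vt finite_deg] by blast
  obtain y1 where "y1 \<noteq> root" using infinite_V by (metis UNIV_eq_I finite.simps insertCI)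
  then have "(root, y1) \<in> (graph_rel E)\<^sup>*" "root \<noteq> y1" using conn unfolding connected_graph_def by auto
  then obtain z where "(root, z) \<in> graph_rel E" by (metis converse_rtranclE)
  then have "z \<in> nbrs E root" by (simp add: graph_rel_def nbrs_def)
  then have dpos: "d > 0" unfolding d_def using finite_deg[of root] card_gt_0_iff by blast
  interpret rg E d using sym finite_deg reg dpos by unfold_locales auto
  have d1: "real d \<ge> 1" using dpos by simp
  define C where "C = D * d ^ D"
  show "\<exists>L0::nat. \<forall>L>L0.
           (\<Sum>x\<in>gball E root L. green E (gball E root L) x root)
             < 10 * (\<Sum>x\<in>{x \<in> gball E root L. gball E x D \<subseteq> gball E root L}.
                        green E (gball E root L) x root)"
  proof (intro exI allI impI)
    fix L assume LC: "L > 2 * C"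
    define B where "B = gball E root L"
    have Bf: "finite B" unfolding B_def by (rule ball_finite[OF finite_deg conn])
    have rootB: "root \<in> B" unfolding B_def gball_def
      using gdist_le[where x=root and y=root and k=0 and E=E] by simp
    define I where "I = {x \<in> B. gball E x D \<subseteq> B}"
    define A where "A = B - I"
    have IB: "I \<subseteq> B" and AB: "A \<subseteq> B" unfolding I_def A_def by auto
    define f where "f t x = killed_pow E B t root x" for t x
    define s where "s t = (\<Sum>x\<in>B. f t x)" for t
    define a where "a t = (\<Sum>x\<in>A. f t x)" for t
    define i where "i t = (\<Sum>x\<in>I. f t x)" for t
    have f0: "f t x \<ge> 0" for t x unfolding f_def by (rule kp_nonneg)
    have sH: "s t = H B t root" for t unfolding s_def f_def H_def by simp
    have sia: "s t = i t + a t" for t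
      unfolding s_def i_def a_def A_def using Bf IB by (simp add: sum.subset_diff[of I B])
    have a0: "a t \<ge> 0" for t unfolding a_def using f0 by (simp add: sum_nonneg)
    have i0: "i t \<ge> 0" for t unfolding i_def using f0 by (simp add: sum_nonneg)
    have hA: "H B D x \<le> 1 - 1 / real d ^ D" if "x \<in> A" for x
    proof -
      from that obtain y where "y \<in> gball E x D" "y \<notin> B" unfolding A_def I_def by auto
      then have k: "gdist E x y \<le> D" "y \<notin> B" unfolding gball_def by auto
      have "H B D x \<le> H B (gdist E x y) x" by (rule H_anti[OF Bf k(1)])
      also have "\<dots> \<le> 1 - 1 / real d ^ gdist E x y" by (rule H_path[OF Bf gdist_rel[OF conn] k(2)])
      also have "\<dots> \<le> 1 - 1 / real d ^ D"
      proof -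
        have "real d ^ gdist E x y \<le> real d ^ D" by (rule power_increasing[OF k(1) d1])
        then have "1 / real d ^ D \<le> 1 / real d ^ gdist E x y" using dpos by (simp add: frac_le)
        then show ?thesis by simp
      qed
      finally show ?thesis .
    qed
    have aN: "(\<Sum>t<N. a t) \<le> real C" for N
    proof -
      have "(\<Sum>t<N. a t) \<le> real D / (1 / real d ^ D)"
        unfolding a_def f_def by (rule leak_bound[OF Bf AB _ hA]) (use dpos in simp)
      also have "\<dots> = real C" unfolding C_def by simp
      finally show ?thesis .
    qed
    obtain y0 where y0: "y0 \<notin> B" using infinite_V Bf by (metis ex_new_if_finite)
    define M where "M = Max ((\<lambda>x. gdist E x y0) ` B)"
    have hB: "H B M x \<le> 1 - 1 / real d ^ M" if "x \<in> B" for x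
    proof -
      have k: "gdist E x y0 \<le> M" unfolding M_def using that Bf by simp
      have "H B M x \<le> H B (gdist E x y0) x" by (rule H_anti[OF Bf k])
      also have "\<dots> \<le> 1 - 1 / real d ^ gdist E x y0" by (rule H_path[OF Bf gdist_rel[OF conn] y0])
      also have "\<dots> \<le> 1 - 1 / real d ^ M"
      proof -
        have "real d ^ gdist E x y0 \<le> real d ^ M" by (rule power_increasing[OF k d1])
        then have "1 / real d ^ M \<le> 1 / real d ^ gdist E x y0" using dpos by (simp add: frac_le)
        then show ?thesis by simp
      qed
      finally show ?thesis .
    qed
    have sN: "(\<Sum>t<N. s t) \<le> real M / (1 / real d ^ M)" for N
      unfolding s_def f_def by (rule leak_bound[OF Bf order_refl _ hB]) (use dpos in simp)
    have s0: "s t \<ge> 0" for t unfolding s_def using f0 by (simp add: sum_nonneg)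
    have s_sum: "summable s" by (rule summableI_nonneg_bounded[OF s0 sN])
    have a_sum: "summable a"
      by (rule summable_comparison_test[OF _ s_sum]) (use a0 i0 sia in auto)
    have i_sum: "summable i"
      by (rule summable_comparison_test[OF _ s_sum]) (use a0 i0 sia in auto)
    have fx_sum: "summable (\<lambda>t. f t x)" if "x \<in> B" for x
    proof (rule summable_comparison_test[OF _ s_sum])
      have "f t x \<le> s t" for t unfolding s_def using that Bf f0 by (intro member_le_sum) auto
      then show "\<exists>N. \<forall>n\<ge>N. norm (f n x) \<le> s n" using f0 by auto
    qed
    have sa: "suminf a \<le> real C" by (rule suminf_le_const[OF a_sum aN])
    have s1: "s t = 1" if "t \<le> L" for t
    proof -
      have "H B t root = 1"
      proof (rule H_full[where g="gdist E root" and L=L])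
        show "finite B" by (rule Bf)
        show "\<And>x z. E x z \<Longrightarrow> gdist E root z \<le> Suc (gdist E root x)" by (rule gdist_step[OF conn])
        show "\<And>x. gdist E root x \<le> L \<Longrightarrow> x \<in> B" unfolding B_def gball_def by simp
        show "gdist E root root + t \<le> L" using gdist_le[where x=root and y=root and k=0 and E=E] that by simp
      qed
      then show ?thesis by (simp add: sH)
    qed
    have sL: "real (Suc L) \<le> suminf s"
    proof -
      have "(\<Sum>t<Suc L. s t) = (\<Sum>t<Suc L. 1)" by (rule sum.cong) (auto simp: s1)
      then have "(\<Sum>t<Suc L. s t) = real (Suc L)" by simp
      moreover have "(\<Sum>t<Suc L. s t) \<le> suminf s" by (rule sum_le_suminf[OF s_sum]) (use s0 in auto)
      ultimately show ?thesis by simp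
    qed
    have sum_eq: "suminf s = suminf i + suminf a"
    proof -
      have "s = (\<lambda>n. i n + a n)" using sia by auto
      then show ?thesis using suminf_add[OF i_sum a_sum] by simp
    qed
    have real_ineq: "suminf s < 10 * suminf i"
    proof -
      have "real L > 2 * real C" using LC by linarith
      then show ?thesis using sL sa sum_eq by simp
    qed
    have green_sum: "(\<Sum>x\<in>X. green E B x root) = ennreal (\<Sum>t. \<Sum>x\<in>X. f t x)" if XB: "X \<subseteq> B" for X
    proof -
      have XF: "finite X" using XB Bf finite_subset by blast
      have "(\<Sum>x\<in>X. green E B x root) = (\<Sum>x\<in>X. ennreal (\<Sum>t. f t x))"
      proof (rule sum.cong)
        fix x assume xX: "x \<in> X"
        have "green E B x root = (\<Sum>t. ennreal (f t x))"
          unfolding green_def f_def using kp_sym[of x B root] xX XB rootB by auto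
        also have "\<dots> = ennreal (\<Sum>t. f t x)" by (rule suminf_ennreal2[OF f0 fx_sum]) (use xX XB in auto)
        finally show "green E B x root = ennreal (\<Sum>t. f t x)" .
      qed simp
      also have "\<dots> = ennreal (\<Sum>x\<in>X. \<Sum>t. f t x)"
      proof (rule sum_ennreal)
        fix x assume "x \<in> X"
        then have "summable (\<lambda>t. f t x)" using fx_sum XB by auto
        then show "0 \<le> (\<Sum>t. f t x)" using f0 suminf_nonneg by blast
      qed
      also have "(\<Sum>x\<in>X. \<Sum>t. f t x) = (\<Sum>t. \<Sum>x\<in>X. f t x)"
        by (rule suminf_sum[symmetric]) (use fx_sum XB in auto)
      finally show ?thesis .
    qed
    have L1: "(\<Sum>x\<in>B. green E B x root) = ennreal (suminf s)"
      using green_sum[OF order_refl] unfolding s_def by simp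
    have L2: "(\<Sum>x\<in>I. green E B x root) = ennreal (suminf i)"
      using green_sum[OF IB] unfolding i_def by simp
    have si0: "0 \<le> suminf s" using s0 s_sum suminf_nonneg by blast
    have ii0: "0 \<le> suminf i" using i0 i_sum suminf_nonneg by blast
    have "ennreal (suminf s) < ennreal (10 * suminf i)"
      using real_ineq si0 by (simp add: ennreal_less_iff)
    also have "ennreal (10 * suminf i) = 10 * ennreal (suminf i)"
      using ii0 by (simp add: ennreal_mult)
    finally show "(\<Sum>x\<in>gball E root L. green E (gball E root L) x root)
             < 10 * (\<Sum>x\<in>{x \<in> gball E root L. gball E x D \<subseteq> gball E root L}.
                        green E (gball E root L) x root)"
      using L1 L2 unfolding B_def I_def by simp
  qed
qed

end
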